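(* Let $G$ be a finite group and $N\trianglelefteq G$ a normal subgroup. Then: (1) $\operatorname{Ind}_N^G:\operatorname{R}(N)\to\operatorname{R}(G)$ is a monomorphism if and only if $(n)_G=(n)_N$ for every $n\in N$. (2) $\operatorname{Ind}_N^G:\operatorname{RO}(N)\to\operatorname{RO}(G)$ is a monomorphism if and only if $(n)_G^{\pm}=(n)_N^{\pm}$ for every $n\in N$.
   Context: $\operatorname{R}(K)$, $\operatorname{RO}(K)$ are the complex and real representation groups of $K$ (Grothendieck groups of $\mathbb{C}K$-, resp. $\mathbb{R}K$-modules). $(n)_K$ is the conjugacy class of $n$ in $K$, and $(n)_K^{\pm}=(n)_K\cup(n^{-1})_K$ its real conjugacy class in $K$. *)

theory Defs
  imports "HOL-Algebra.Algebra" "Jordan_Normal_Form.Matrix"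
begin

definition mat_tr :: "'a::comm_ring_1 mat \<Rightarrow> 'a" where
  "mat_tr A = (\<Sum>i<dim_row A. A $$ (i, i))"

definition is_rep :: "('g, 'b) monoid_scheme \<Rightarrow> nat \<Rightarrow> ('g \<Rightarrow> 'a::field mat) \<Rightarrow> bool" where
  "is_rep K d \<rho> \<longleftrightarrow>
     (\<forall>x\<in>carrier K. \<rho> x \<in> carrier_mat d d) \<and>
     \<rho> \<one>\<^bsub>K\<^esub> = 1\<^sub>m d \<and>
     (\<forall>x\<in>carrier K. \<forall>y\<in>carrier K. \<rho> (x \<otimes>\<^bsub>K\<^esub> y) = \<rho> x * \<rho> y)"

definition complex_characters :: "('g, 'b) monoid_scheme \<Rightarrow> ('g \<Rightarrow> complex) set" where
  "complex_characters K = {\<chi>. \<exists>d \<rho>. is_rep K d (\<rho> :: 'g \<Rightarrow> complex mat) \<and>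
      \<chi> = (\<lambda>x. if x \<in> carrier K then mat_tr (\<rho> x) else 0)}"

definition real_characters :: "('g, 'b) monoid_scheme \<Rightarrow> ('g \<Rightarrow> complex) set" where
  "real_characters K = {\<chi>. \<exists>d \<rho>. is_rep K d (\<rho> :: 'g \<Rightarrow> real mat) \<and>
      \<chi> = (\<lambda>x. if x \<in> carrier K then complex_of_real (mat_tr (\<rho> x)) else 0)}"

(* The representation groups, realised (via the character map, which embeds the
   Grothendieck group into class functions) as the groups of virtual characters
   [V] - [W]. *)
definition R :: "('g, 'b) monoid_scheme \<Rightarrow> ('g \<Rightarrow> complex) set" where
  "R K = {\<lambda>x. \<chi> x - \<psi> x | \<chi> \<psi>. \<chi> \<in> complex_characters K \<and> \<psi> \<in> complex_characters K}"

definition RO :: "('g, 'b) monoid_scheme \<Rightarrow> ('g \<Rightarrow> complex) set" where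
  "RO K = {\<lambda>x. \<chi> x - \<psi> x | \<chi> \<psi>. \<chi> \<in> real_characters K \<and> \<psi> \<in> real_characters K}"

definition Ind :: "('g, 'b) monoid_scheme \<Rightarrow> 'g set \<Rightarrow> ('g \<Rightarrow> complex) \<Rightarrow> ('g \<Rightarrow> complex)" where
  "Ind G N f = (\<lambda>g. if g \<in> carrier G then
      (1 / of_nat (card N)) * (\<Sum>x\<in>carrier G.
         if x \<otimes>\<^bsub>G\<^esub> g \<otimes>\<^bsub>G\<^esub> inv\<^bsub>G\<^esub> x \<in> N
         then f (x \<otimes>\<^bsub>G\<^esub> g \<otimes>\<^bsub>G\<^esub> inv\<^bsub>G\<^esub> x) else 0)
      else 0)"

definition conj_class :: "('g, 'b) monoid_scheme \<Rightarrow> 'g set \<Rightarrow> 'g \<Rightarrow> 'g set" where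
  "conj_class G K n = {k \<otimes>\<^bsub>G\<^esub> n \<otimes>\<^bsub>G\<^esub> inv\<^bsub>G\<^esub> k | k. k \<in> K}"

definition real_conj_class :: "('g, 'b) monoid_scheme \<Rightarrow> 'g set \<Rightarrow> 'g \<Rightarrow> 'g set" where
  "real_conj_class G K n = conj_class G K n \<union> conj_class G K (inv\<^bsub>G\<^esub> n)"

end

theory Submission
  imports Defs "Jordan_Normal_Form.Schur_Decomposition"
begin

lemma mat_tr_mult_comm:
  assumes "A \<in> carrier_mat n m" "B \<in> carrier_mat m n"
  shows "mat_tr (A * B) = mat_tr (B * A)"
proof -
  have "mat_tr (A * B) = (\<Sum>i<n. \<Sum>j<m. A $$ (i,j) * B $$ (j,i))"
    using assms by (simp add: mat_tr_def scalar_prod_def atLeast0LessThan)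
  also have "\<dots> = (\<Sum>j<m. \<Sum>i<n. B $$ (j,i) * A $$ (i,j))"
    by (subst sum.swap) (simp add: mult.commute)
  also have "\<dots> = mat_tr (B * A)"
    using assms by (simp add: mat_tr_def scalar_prod_def atLeast0LessThan)
  finally show ?thesis .
qed

lemma mat_tr_one: "mat_tr (1\<^sub>m d :: 'a::comm_ring_1 mat) = of_nat d"
  by (simp add: mat_tr_def)

definition rentry :: "complex \<Rightarrow> nat \<Rightarrow> nat \<Rightarrow> real" where
  "rentry a s t = (if s = 0 then (if t = 0 then Re a else - Im a) else (if t = 0 then Im a else Re a))"

definition realify :: "complex mat \<Rightarrow> real mat" where
  "realify A = mat (2 * dim_row A) (2 * dim_col A) (\<lambda>(i,j). rentry (A $$ (i div 2, j div 2)) (i mod 2) (j mod 2))"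

lemma sum_split2: "(\<Sum>l<2*d. f l) = (\<Sum>p<d. f (2*p) + f (2*p+1::nat))"
  by (induct d) (simp_all add: add.assoc)

lemma realify_index: "i < 2 * dim_row A \<Longrightarrow> j < 2 * dim_col A \<Longrightarrow>
  realify A $$ (i,j) = rentry (A $$ (i div 2, j div 2)) (i mod 2) (j mod 2)"
  by (simp add: realify_def)
lemma realify_dim_row[simp]: "dim_row (realify A) = 2 * dim_row A"
  by (simp add: realify_def)
lemma realify_dim_col[simp]: "dim_col (realify A) = 2 * dim_col A"
  by (simp add: realify_def)

lemma realify_carrier: "A \<in> carrier_mat n m \<Longrightarrow> realify A \<in> carrier_mat (2*n) (2*m)"
  by (rule carrier_matI) auto


lemma realify_one: "realify (1\<^sub>m d) = 1\<^sub>m (2*d)"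
proof (rule eq_matI)
  fix i j assume ij: "i < dim_row (1\<^sub>m (2*d))" "j < dim_col (1\<^sub>m (2 * d))"
  then have i: "i < 2*d" and j: "j < 2*d" by auto
  then have d: "i div 2 < d" "j div 2 < d" by auto
  have e: "(i div 2 = j div 2 \<and> i mod 2 = j mod 2) \<longleftrightarrow> i = j"
    by (metis div_mult_mod_eq)
  have m: "i mod 2 = 0 \<or> i mod 2 = 1" "j mod 2 = 0 \<or> j mod 2 = 1" by auto
  have "realify (1\<^sub>m d) $$ (i, j) = rentry (1\<^sub>m d $$ (i div 2, j div 2)) (i mod 2) (j mod 2)"
    using i j by (simp add: realify_index)
  also have "\<dots> = (if i = j then 1 else 0)"
    using d e m unfolding rentry_def by (auto simp del: One_nat_def)
  finally show "realify (1\<^sub>m d) $$ (i, j) = 1\<^sub>m (2 * d) $$ (i, j)"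
    using i j by simp
qed auto

lemma rentry_mult: "s < 2 \<Longrightarrow> t < 2 \<Longrightarrow>
  rentry a s 0 * rentry b 0 t + rentry a s 1 * rentry b 1 t = rentry (a*b) s t"
  unfolding rentry_def by (cases "s = 0"; cases "t = 0") (auto simp: algebra_simps)

lemma rentry_sum: "rentry (sum f S) s t = (\<Sum>x\<in>S. rentry (f x) s t)"
  unfolding rentry_def by (simp add: Re_sum Im_sum sum_negf)

lemma realify_mult:
  assumes A: "A \<in> carrier_mat n m" and B: "B \<in> carrier_mat m k"
  shows "realify (A * B) = realify A * realify B"
proof (rule eq_matI)
  fix i j assume "i < dim_row (realify A * realify B)" "j < dim_col (realify A * realify B)"
  then have i: "i < 2*n" and j: "j < 2*k" using A B by auto
  then have i2: "i div 2 < n" and j2: "j div 2 < k" by auto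
  define a where "a = (\<lambda>p. A $$ (i div 2, p))"
  define b where "b = (\<lambda>p. B $$ (p, j div 2))"
  have AB: "(A * B) $$ (i div 2, j div 2) = (\<Sum>p<m. a p * b p)"
    using A B i2 j2 by (simp add: scalar_prod_def a_def b_def atLeast0LessThan)
  have "(realify A * realify B) $$ (i, j) = (\<Sum>l<2*m. realify A $$ (i, l) * realify B $$ (l, j))"
    using A B i j by (simp add: scalar_prod_def atLeast0LessThan)
  also have "\<dots> = (\<Sum>p<m. realify A $$ (i, 2*p) * realify B $$ (2*p, j)
        + realify A $$ (i, 2*p+1) * realify B $$ (2*p+1, j))"
    by (rule sum_split2)
  also have "\<dots> = (\<Sum>p<m. rentry (a p) (i mod 2) 0 * rentry (b p) 0 (j mod 2)
        + rentry (a p) (i mod 2) 1 * rentry (b p) 1 (j mod 2))"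
    using A B i j by (intro sum.cong refl) (simp add: realify_index a_def b_def)
  also have "\<dots> = (\<Sum>p<m. rentry (a p * b p) (i mod 2) (j mod 2))"
    by (intro sum.cong refl rentry_mult) auto
  also have "\<dots> = realify (A * B) $$ (i, j)"
    using A B i j by (simp add: realify_index AB rentry_sum)
  finally show "realify (A * B) $$ (i, j) = (realify A * realify B) $$ (i, j)" by simp
qed (use A B in auto)

lemma realify_tr:
  assumes A: "A \<in> carrier_mat n n"
  shows "complex_of_real (mat_tr (realify A)) = mat_tr A + cnj (mat_tr A)"
proof -
  have "mat_tr (realify A) = (\<Sum>l<2*n. realify A $$ (l,l))"
    using A by (simp add: mat_tr_def)
  also have "\<dots> = (\<Sum>p<n. realify A $$ (2*p,2*p) + realify A $$ (2*p+1,2*p+1))"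
    by (rule sum_split2)
  also have "\<dots> = (\<Sum>p<n. 2 * Re (A $$ (p,p)))"
    using A by (intro sum.cong refl) (simp add: realify_index rentry_def)
  finally have "mat_tr (realify A) = 2 * Re (mat_tr A)"
    using A by (simp add: mat_tr_def Re_sum sum_distrib_left)
  then show ?thesis by (simp add: complex_add_cnj)
qed

lemma ut_mult:
  assumes A: "A \<in> carrier_mat n n" and B: "B \<in> carrier_mat n n"
    and uA: "upper_triangular A" and uB: "upper_triangular B"
  shows "upper_triangular (A * B) \<and> (\<forall>i<n. (A * B) $$ (i,i) = A $$ (i,i) * B $$ (i,i))"
proof (intro conjI allI impI)
  show "upper_triangular (A * B)"
  proof (rule upper_triangularI)
    fix i j assume ji: "j < i" and i: "i < dim_row (A * B)"
    then have i': "i < n" using A by simp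
    have "(A * B) $$ (i, j) = (\<Sum>k\<in>{0..<n}. A $$ (i,k) * B $$ (k,j))"
      using A B i' ji by (simp add: scalar_prod_def)
    also have "\<dots> = 0"
    proof (rule sum.neutral, rule ballI)
      fix k assume k: "k \<in> {0..<n}"
      show "A $$ (i,k) * B $$ (k,j) = 0"
      proof (cases "k < i")
        case True then show ?thesis using uA A i' by (auto dest: upper_triangularD)
      next
        case False then have "j < k" using ji by simp
        then show ?thesis using uB B k by (auto dest: upper_triangularD)
      qed
    qed
    finally show "(A * B) $$ (i, j) = 0" .
  qed
next
  fix i assume i: "i < n"
  have "(A * B) $$ (i, i) = (\<Sum>k\<in>{0..<n}. A $$ (i,k) * B $$ (k,i))"
    using A B i by (simp add: scalar_prod_def)
  also have "\<dots> = A $$ (i,i) * B $$ (i,i) + (\<Sum>k\<in>{0..<n} - {i}. A $$ (i,k) * B $$ (k,i))"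
    using i by (subst sum.remove[of _ i]) auto
  also have "(\<Sum>k\<in>{0..<n} - {i}. A $$ (i,k) * B $$ (k,i)) = 0"
  proof (rule sum.neutral, rule ballI)
    fix k assume k: "k \<in> {0..<n} - {i}"
    show "A $$ (i,k) * B $$ (k,i) = 0"
    proof (cases "k < i")
      case True then show ?thesis using uA A i by (auto dest: upper_triangularD)
    next
      case False then have "i < k" using k by simp
      then show ?thesis using uB B k by (auto dest: upper_triangularD)
    qed
  qed
  finally show "(A * B) $$ (i, i) = A $$ (i,i) * B $$ (i,i)" by simp
qed

lemma ut_pow:
  assumes B: "B \<in> carrier_mat n n" and uB: "upper_triangular B"
  shows "upper_triangular (B ^\<^sub>m k) \<and> (\<forall>i<n. (B ^\<^sub>m k) $$ (i,i) = B $$ (i,i) ^ k)"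
proof (induct k)
  case 0
  then show ?case using B by auto
next
  case (Suc k)
  have "B ^\<^sub>m k \<in> carrier_mat n n" using B by simp
  from ut_mult[OF this B _ uB] Suc show ?case by (auto simp: power_commutes)
qed

lemma real_finite_order_trace:
  assumes A: "(A :: real mat) \<in> carrier_mat d d" and m: "A ^\<^sub>m m = 1\<^sub>m d" "0 < m"
  shows "mat_tr (A ^\<^sub>m (m - 1)) = mat_tr A"
proof -
  define C where "C = map_mat complex_of_real A"
  have C: "C \<in> carrier_mat d d" using A by (simp add: C_def)
  have Cpow: "C ^\<^sub>m k = map_mat complex_of_real (A ^\<^sub>m k)" for k
    unfolding C_def by (rule of_real_hom.mat_hom_pow[OF A, symmetric])
  have trmap: "mat_tr (map_mat complex_of_real M) = complex_of_real (mat_tr M)" if "M \<in> carrier_mat d d" for M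
    using that by (simp add: mat_tr_def)
  obtain es where "char_poly C = (\<Prod>a\<leftarrow>es. [:- a, 1:])"
    using char_poly_factorized[OF C] by blast
  moreover obtain B P Q where sd: "schur_decomposition C es = (B,P,Q)"
    by (cases "schur_decomposition C es") auto
  ultimately have sim: "similar_mat_wit C B P Q" and uB: "upper_triangular B"
    using schur_decomposition[OF C] by blast+
  have BPQ: "B \<in> carrier_mat d d" "P \<in> carrier_mat d d" "Q \<in> carrier_mat d d"
    and PQ: "P * Q = 1\<^sub>m d" "Q * P = 1\<^sub>m d"
    using sim C unfolding similar_mat_wit_def Let_def by auto
  have trB: "mat_tr (C ^\<^sub>m k) = mat_tr (B ^\<^sub>m k)" for k
  proof -
    have Bk: "B ^\<^sub>m k \<in> carrier_mat d d" using BPQ by simp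
    have "C ^\<^sub>m k = P * (B ^\<^sub>m k * Q)"
      using similar_mat_wit_pow_id[OF sim] BPQ Bk by (simp add: assoc_mult_mat[of _ d d _ d _ d])
    then have "mat_tr (C ^\<^sub>m k) = mat_tr (B ^\<^sub>m k * (Q * P))"
      using mat_tr_mult_comm[of P d d "B ^\<^sub>m k * Q"] BPQ Bk by simp
    also have "mat_tr (B ^\<^sub>m k * (Q * P)) = mat_tr (B ^\<^sub>m k)"
      using Bk PQ by (simp add: right_mult_one_mat[OF Bk])
    finally show ?thesis .
  qed
  have Bm: "B ^\<^sub>m m = 1\<^sub>m d"
  proof -
    have Bk: "B ^\<^sub>m m \<in> carrier_mat d d" using BPQ by simp
    have "C ^\<^sub>m m = 1\<^sub>m d" using Cpow m by (simp add: of_real_hom.mat_hom_one)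
    moreover have "B ^\<^sub>m m = Q * C ^\<^sub>m m * P"
      using similar_mat_wit_pow_id[OF similar_mat_wit_sym[OF sim]] by simp
    ultimately show ?thesis using PQ BPQ by simp
  qed
  have diag: "(B $$ (i,i)) ^ (m - 1) = cnj (B $$ (i,i))" if i: "i < d" for i
  proof -
    define \<mu> where "\<mu> = B $$ (i,i)"
    have "\<mu> ^ m = 1" using ut_pow[OF BPQ(1) uB, of m] Bm i by (simp add: \<mu>_def)
    then have "norm \<mu> ^ m = 1" by (metis norm_one norm_power)
    then have n1: "norm \<mu> = 1" using power_eq_imp_eq_base[of "norm \<mu>" m 1] m(2) by simp
    have nz: "\<mu> \<noteq> 0" using n1 by auto
    have "\<mu> * \<mu> ^ (m - 1) = \<mu> ^ m" using m(2) by (cases m) auto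
    then have a: "\<mu> ^ (m - 1) = 1 / \<mu>" using \<open>\<mu> ^ m = 1\<close> nz by (simp add: field_simps)
    have "\<mu> * cnj \<mu> = complex_of_real ((norm \<mu>)\<^sup>2)" by (rule complex_norm_square[symmetric])
    then have "\<mu> * cnj \<mu> = 1" using n1 by simp
    then have b: "cnj \<mu> = 1 / \<mu>" using nz by (simp add: field_simps)
    show ?thesis unfolding \<mu>_def[symmetric] a b ..
  qed
  have "complex_of_real (mat_tr (A ^\<^sub>m (m - 1))) = mat_tr (C ^\<^sub>m (m - 1))"
    using trmap[of "A ^\<^sub>m (m - 1)"] A Cpow by simp
  also have "\<dots> = mat_tr (B ^\<^sub>m (m - 1))" by (rule trB)
  also have "\<dots> = (\<Sum>i<d. cnj (B $$ (i,i)))"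
    using ut_pow[OF BPQ(1) uB, of "m - 1"] BPQ diag by (simp add: mat_tr_def)
  also have "\<dots> = cnj (mat_tr (B ^\<^sub>m 1))"
    using BPQ by (simp add: mat_tr_def)
  also have "\<dots> = cnj (mat_tr (C ^\<^sub>m 1))" by (simp only: trB)
  also have "\<dots> = complex_of_real (mat_tr A)"
    using trmap[of "A ^\<^sub>m 1"] A Cpow[of 1] by simp
  finally show ?thesis by simp
qed

context group
begin

lemma rep_carrier: "is_rep G d \<rho> \<Longrightarrow> x \<in> carrier G \<Longrightarrow> \<rho> x \<in> carrier_mat d d"
  unfolding is_rep_def by blast

lemma rep_mult: "is_rep G d \<rho> \<Longrightarrow> x \<in> carrier G \<Longrightarrow> y \<in> carrier G \<Longrightarrow> \<rho> (x \<otimes> y) = \<rho> x * \<rho> y"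
  unfolding is_rep_def by blast

lemma rep_one: "is_rep G d \<rho> \<Longrightarrow> \<rho> \<one> = 1\<^sub>m d"
  unfolding is_rep_def by blast

lemma rep_inv_l: assumes "is_rep G d \<rho>" "x \<in> carrier G"
  shows "\<rho> (inv x) * \<rho> x = 1\<^sub>m d"
  using rep_mult[OF assms(1), of "inv x" x] rep_one[OF assms(1)] assms(2) by simp

lemma rep_conj_tr: assumes r: "is_rep G d \<rho>" and x: "x \<in> carrier G" and y: "y \<in> carrier G"
  shows "mat_tr (\<rho> (y \<otimes> x \<otimes> inv y)) = mat_tr (\<rho> x)"
proof -
  have c: "\<rho> x \<in> carrier_mat d d" "\<rho> y \<in> carrier_mat d d" "\<rho> (inv y) \<in> carrier_mat d d"
    using rep_carrier[OF r] x y by auto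
  have "\<rho> (y \<otimes> x \<otimes> inv y) = \<rho> y * (\<rho> x * \<rho> (inv y))"
    using rep_mult[OF r] x y c by (simp add: assoc_mult_mat[of _ d d _ d _ d])
  then have "mat_tr (\<rho> (y \<otimes> x \<otimes> inv y)) = mat_tr ((\<rho> x * \<rho> (inv y)) * \<rho> y)"
    using mat_tr_mult_comm[of "\<rho> y" d d "\<rho> x * \<rho> (inv y)"] c by simp
  also have "(\<rho> x * \<rho> (inv y)) * \<rho> y = \<rho> x * (\<rho> (inv y) * \<rho> y)"
    using c by (rule_tac assoc_mult_mat) auto
  also have "\<dots> = \<rho> x" using rep_inv_l[OF r y] c by simp
  finally show ?thesis .
qed

lemma rep_pow: assumes r: "is_rep G d \<rho>" and x: "x \<in> carrier G"
  shows "\<rho> (x [^] (k::nat)) = \<rho> x ^\<^sub>m k"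
proof (induct k)
  case 0 then show ?case using rep_one[OF r] rep_carrier[OF r x] by simp
next
  case (Suc k) then show ?case using rep_mult[OF r] x by simp
qed

lemma inv_as_pow: assumes "finite (carrier G)" "x \<in> carrier G"
  shows "inv x = x [^] (ord x - 1)"
proof -
  have o: "ord x \<ge> 1" using ord_ge_1 assms by blast
  have "x [^] (ord x - 1) \<otimes> x = x [^] ord x"
    using o assms(2) by (metis Suc_diff_1 less_le_trans less_numeral_extra(1) nat_pow_Suc)
  also have "\<dots> = \<one>" using assms by simp
  finally show ?thesis using assms by (intro inv_equality) auto
qed

lemma real_rep_inv_tr: assumes fin: "finite (carrier G)" and r: "is_rep G d (\<rho> :: 'a \<Rightarrow> real mat)"
  and x: "x \<in> carrier G"
  shows "mat_tr (\<rho> (inv x)) = mat_tr (\<rho> x)"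
proof -
  have o: "ord x > 0" using ord_ge_1 fin x by fastforce
  have "\<rho> x ^\<^sub>m ord x = 1\<^sub>m d"
    using rep_pow[OF r x, of "ord x", symmetric] rep_one[OF r] x by simp
  then have "mat_tr (\<rho> x ^\<^sub>m (ord x - 1)) = mat_tr (\<rho> x)"
    using real_finite_order_trace[OF rep_carrier[OF r x]] o by blast
  then show ?thesis using inv_as_pow[OF fin x] rep_pow[OF r x] by simp
qed

definition cyc :: "'a \<Rightarrow> 'a set" where "cyc n = range (\<lambda>j::nat. n [^] j)"
definition zet :: "'a \<Rightarrow> complex" where "zet n = cis (2 * pi / real (ord n))"
definition lam :: "'a \<Rightarrow> nat \<Rightarrow> 'a \<Rightarrow> complex" where
  "lam n k h = zet n ^ (k * (SOME j. h = n [^] j))"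

context
  fixes n assumes fin: "finite (carrier G)" and n: "n \<in> carrier G"
begin

lemma ord_n_pos: "ord n > 0" using ord_ge_1[OF fin n] by simp

lemma zet_pow: "zet n ^ m = cis (2 * pi * real m / real (ord n))"
  unfolding zet_def DeMoivre by (simp add: field_simps)

lemma zet_pow_1_iff: "zet n ^ m = 1 \<longleftrightarrow> n [^] m = \<one>"
proof -
  have o: "real (ord n) > 0" using ord_n_pos by simp
  have "zet n ^ m = 1 \<longleftrightarrow> ord n dvd m"
  proof
    assume "zet n ^ m = 1"
    then have "cos (2 * pi * real m / real (ord n)) = 1"
      unfolding zet_pow by (metis Re_complex_of_real cis.sel(1) one_complex.sel(1))
    then obtain z :: int where z: "2 * pi * real m / real (ord n) = real_of_int z * 2 * pi"
      using cos_one_2pi_int by blast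
    then have "real m = real_of_int z * real (ord n)" using o by (simp add: field_simps)
    then have "int m = z * int (ord n)" by (metis of_int_eq_iff of_int_mult of_int_of_nat_eq)
    then have "int (ord n) dvd int m" by simp
    then show "ord n dvd m" by simp
  next
    assume "ord n dvd m"
    then obtain q where "m = ord n * q" by auto
    then have "2 * pi * real m / real (ord n) = 2 * pi * real q" using o by simp
    then show "zet n ^ m = 1" unfolding zet_pow by simp
  qed
  then show ?thesis using pow_eq_id[OF n] by simp
qed

lemma zet_pow_eq: assumes "n [^] a = n [^] (b::nat)" shows "zet n ^ a = zet n ^ b"
proof -
  have *: "zet n ^ a = zet n ^ b" if ab: "a \<le> b" "n [^] a = n [^] (b::nat)" for a b
  proof -
    have "n [^] a \<otimes> n [^] (b - a) = n [^] (a + (b - a))" using n by (rule nat_pow_mult)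
    also have "a + (b - a) = b" using ab(1) by simp
    finally have "n [^] a \<otimes> n [^] (b - a) = n [^] a" using ab(2) by simp
    then have "n [^] (b - a) = \<one>" using n by simp
    then have "zet n ^ (b - a) = 1" using zet_pow_1_iff by simp
    then show ?thesis using ab by (metis le_add_diff_inverse mult.right_neutral power_add)
  qed
  show ?thesis
  proof (cases "a \<le> b")
    case True then show ?thesis using *[OF True assms] by blast
  next
    case False then have "b \<le> a" by simp
    from *[OF this assms[symmetric]] show ?thesis by (rule sym)
  qed
qed

lemma lam_pow: "lam n k (n [^] (j::nat)) = zet n ^ (k * j)"
proof -
  define j' where "j' = (SOME j'. n [^] j = n [^] (j'::nat))"
  have "n [^] j = n [^] j'" unfolding j'_def by (rule someI) (rule refl)
  then have "zet n ^ j' = zet n ^ j" using zet_pow_eq by metis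
  moreover have "zet n ^ (k * i) = (zet n ^ i) ^ k" for i
    by (metis power_mult mult.commute)
  ultimately show ?thesis unfolding lam_def j'_def[symmetric] by metis
qed

lemma cyc_closed: "h \<in> cyc n \<Longrightarrow> h \<in> carrier G"
  using n by (auto simp: cyc_def)

lemma one_cyc: "\<one> \<in> cyc n"
  unfolding cyc_def by (rule range_eqI[of _ _ 0]) simp

lemma n_cyc: "n \<in> cyc n"
  unfolding cyc_def by (rule range_eqI[of _ _ 1]) (use n in simp)

lemma cyc_mult: "h1 \<in> cyc n \<Longrightarrow> h2 \<in> cyc n \<Longrightarrow> h1 \<otimes> h2 \<in> cyc n"
  unfolding cyc_def using n by (auto simp: nat_pow_mult)

lemma cyc_inv: assumes "h \<in> cyc n" shows "inv h \<in> cyc n"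
proof -
  obtain j where h: "h = n [^] (j::nat)" using assms by (auto simp: cyc_def)
  have "n [^] ((ord n - 1) * j) \<otimes> h = n [^] ((ord n - 1) * j + j)"
    using n h by (simp add: nat_pow_mult)
  also have "(ord n - 1) * j + j = ord n * j" using ord_n_pos by (cases "ord n") auto
  also have "n [^] (ord n * j) = (n [^] ord n) [^] j" by (rule nat_pow_pow[OF n, symmetric])
  also have "\<dots> = \<one>" using n by simp
  finally have "inv h = n [^] ((ord n - 1) * j)" using n h by (intro inv_equality) auto
  then show ?thesis by (simp add: cyc_def)
qed

lemma cyc_comm: "h \<in> cyc n \<Longrightarrow> h \<otimes> n = n \<otimes> h"
  unfolding cyc_def using n by (auto simp: nat_pow_Suc2[symmetric])

lemma lam_mult: assumes "h1 \<in> cyc n" "h2 \<in> cyc n"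
  shows "lam n k (h1 \<otimes> h2) = lam n k h1 * lam n k h2"
proof -
  obtain a b where "h1 = n [^] (a::nat)" "h2 = n [^] (b::nat)" using assms by (auto simp: cyc_def)
  then show ?thesis using n by (simp add: nat_pow_mult lam_pow power_add algebra_simps)
qed

lemma lam_one: "lam n k \<one> = 1"
  using lam_pow[of k 0] by simp

end

end

context group
begin

lemma cancel_l1 [simp]: "x \<in> carrier G \<Longrightarrow> y \<in> carrier G \<Longrightarrow> x \<otimes> (inv x \<otimes> y) = y"
  by (simp add: m_assoc[symmetric])
lemma cancel_l2 [simp]: "x \<in> carrier G \<Longrightarrow> y \<in> carrier G \<Longrightarrow> inv x \<otimes> (x \<otimes> y) = y"
  by (simp add: m_assoc[symmetric])

definition lcos :: "'a \<Rightarrow> 'a \<Rightarrow> 'a set" where "lcos n x = {y \<in> carrier G. inv x \<otimes> y \<in> cyc n}"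
definition rpr :: "'a \<Rightarrow> 'a \<Rightarrow> 'a" where "rpr n x = (SOME t. t \<in> lcos n x)"
definition tvs :: "'a \<Rightarrow> 'a set" where "tvs n = rpr n ` carrier G"
definition dd :: "'a \<Rightarrow> nat" where "dd n = card (tvs n)"
definition ee :: "'a \<Rightarrow> nat \<Rightarrow> 'a" where "ee n = (SOME e. bij_betw e {..<dd n} (tvs n))"
definition Jx :: "'a \<Rightarrow> 'a \<Rightarrow> nat" where "Jx n z = (THE j. j < dd n \<and> z \<in> lcos n (ee n j))"
definition indrep :: "'a \<Rightarrow> nat \<Rightarrow> 'a \<Rightarrow> complex mat" where
  "indrep n k x = mat (dd n) (dd n) (\<lambda>(i,j).
     if inv (ee n i) \<otimes> x \<otimes> ee n j \<in> cyc n then lam n k (inv (ee n i) \<otimes> x \<otimes> ee n j) else 0)"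

context
  fixes n assumes fin: "finite (carrier G)" and n: "n \<in> carrier G"
begin

lemma lcos_refl: "x \<in> carrier G \<Longrightarrow> x \<in> lcos n x"
  unfolding lcos_def using one_cyc[OF fin n] by simp

lemma lcos_sym: assumes x: "x \<in> carrier G" and y: "y \<in> lcos n x" shows "x \<in> lcos n y"
proof -
  have yc: "y \<in> carrier G" and h: "inv x \<otimes> y \<in> cyc n" using y by (auto simp: lcos_def)
  have "inv (inv x \<otimes> y) = inv y \<otimes> x" using x yc by (simp add: inv_mult_group)
  then show ?thesis using cyc_inv[OF fin n h] x by (simp add: lcos_def)
qed

lemma lcos_trans: assumes x: "x \<in> carrier G" and y: "y \<in> lcos n x" and z: "z \<in> lcos n y"
  shows "z \<in> lcos n x"
proof -
  have yc: "y \<in> carrier G" and h: "inv x \<otimes> y \<in> cyc n" using y by (auto simp: lcos_def)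
  have zc: "z \<in> carrier G" and h2: "inv y \<otimes> z \<in> cyc n" using z by (auto simp: lcos_def)
  have "(inv x \<otimes> y) \<otimes> (inv y \<otimes> z) = inv x \<otimes> z" using x yc zc by (simp add: m_assoc)
  then show ?thesis using cyc_mult[OF fin n h h2] zc by (simp add: lcos_def)
qed

lemma lcos_carrier: "lcos n x \<subseteq> carrier G" by (auto simp: lcos_def)

lemma lcos_eq: assumes x: "x \<in> carrier G" and y: "y \<in> lcos n x" shows "lcos n y = lcos n x"
proof -
  have yc: "y \<in> carrier G" using y lcos_carrier by blast
  show ?thesis
  proof
    show "lcos n y \<subseteq> lcos n x" using lcos_trans[OF x y] by blast
    show "lcos n x \<subseteq> lcos n y" using lcos_trans[OF yc lcos_sym[OF x y]] by blast
  qed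
qed

lemma rpr_in: "x \<in> carrier G \<Longrightarrow> rpr n x \<in> lcos n x"
  unfolding rpr_def by (rule someI) (rule lcos_refl)

lemma tvs_carrier: "tvs n \<subseteq> carrier G"
  unfolding tvs_def using rpr_in lcos_carrier by blast

lemma tvs_finite: "finite (tvs n)"
  using tvs_carrier fin finite_subset by blast

lemma tvs_unique: assumes x: "x \<in> carrier G" and t: "t \<in> tvs n" and xt: "x \<in> lcos n t"
  shows "t = rpr n x"
proof -
  obtain a where a: "a \<in> carrier G" and ta: "t = rpr n a" using t by (auto simp: tvs_def)
  have "lcos n t = lcos n a" unfolding ta by (rule lcos_eq[OF a rpr_in[OF a]])
  moreover have "lcos n x = lcos n t" using lcos_eq[OF _ xt] t tvs_carrier by blast
  ultimately have "lcos n x = lcos n a" by simp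
  then show ?thesis unfolding ta rpr_def by simp
qed

lemma rpr_tvs: assumes x: "x \<in> carrier G" shows "rpr n x \<in> tvs n" "x \<in> lcos n (rpr n x)"
  using x lcos_sym[OF x rpr_in[OF x]] by (auto simp: tvs_def)

lemma ee_bij: "bij_betw (ee n) {..<dd n} (tvs n)"
proof -
  have "\<exists>e. bij_betw e {..<dd n} (tvs n)"
    using ex_bij_betw_nat_finite[OF tvs_finite] by (simp add: dd_def atLeast0LessThan)
  then show ?thesis unfolding ee_def by (rule someI_ex)
qed

lemma ee_carrier: "i < dd n \<Longrightarrow> ee n i \<in> carrier G"
  using ee_bij tvs_carrier by (auto simp: bij_betw_def)

lemma ee_tvs: "i < dd n \<Longrightarrow> ee n i \<in> tvs n"
  using ee_bij by (auto simp: bij_betw_def)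

lemma ee_inj: "i < dd n \<Longrightarrow> j < dd n \<Longrightarrow> ee n i = ee n j \<Longrightarrow> i = j"
  using ee_bij by (auto simp: bij_betw_def inj_on_def)

lemma Jx_ex1: assumes x: "x \<in> carrier G" shows "\<exists>!j. j < dd n \<and> x \<in> lcos n (ee n j)"
proof -
  obtain j where j: "j < dd n" "ee n j = rpr n x"
    using ee_bij rpr_tvs[OF x] by (metis bij_betw_iff_bijections lessThan_iff)
  show ?thesis
  proof (rule ex1I[of _ j])
    show "j < dd n \<and> x \<in> lcos n (ee n j)" using j rpr_tvs[OF x] by simp
  next
    fix j' assume j': "j' < dd n \<and> x \<in> lcos n (ee n j')"
    then have "ee n j' = rpr n x" using tvs_unique[OF x ee_tvs] by blast
    then show "j' = j" using j j' ee_inj by metis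
  qed
qed

lemma Jx: assumes x: "x \<in> carrier G"
  shows "Jx n x < dd n" "x \<in> lcos n (ee n (Jx n x))"
    "\<And>j. j < dd n \<Longrightarrow> x \<in> lcos n (ee n j) \<Longrightarrow> j = Jx n x"
proof -
  have "Jx n x < dd n \<and> x \<in> lcos n (ee n (Jx n x))"
    unfolding Jx_def by (rule theI'[OF Jx_ex1[OF x]])
  then show "Jx n x < dd n" "x \<in> lcos n (ee n (Jx n x))" by auto
  fix j assume "j < dd n" "x \<in> lcos n (ee n j)"
  then show "j = Jx n x" using Jx_ex1[OF x] \<open>Jx n x < dd n \<and> x \<in> lcos n (ee n (Jx n x))\<close> by blast
qed

lemma key_iff: assumes i: "i < dd n" and j: "j < dd n" and x: "x \<in> carrier G"
  shows "inv (ee n i) \<otimes> x \<otimes> ee n j \<in> cyc n \<longleftrightarrow> j = Jx n (inv x \<otimes> ee n i)"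
proof -
  define z where "z = inv x \<otimes> ee n i"
  have ei: "ee n i \<in> carrier G" and ej: "ee n j \<in> carrier G" using ee_carrier i j by auto
  have z: "z \<in> carrier G" using x ei by (simp add: z_def)
  have "inv z = inv (ee n i) \<otimes> x" using x ei by (simp add: z_def inv_mult_group)
  then have "inv (ee n i) \<otimes> x \<otimes> ee n j \<in> cyc n \<longleftrightarrow> ee n j \<in> lcos n z"
    using ej by (simp add: lcos_def)
  also have "\<dots> \<longleftrightarrow> z \<in> lcos n (ee n j)"
    using lcos_sym z ej by blast
  also have "\<dots> \<longleftrightarrow> j = Jx n z"
    using Jx[OF z] j by blast
  finally show ?thesis unfolding z_def .
qed

end

end

context group
begin

context
  fixes n assumes fin: "finite (carrier G)" and n: "n \<in> carrier G"
begin

lemma indrep_carrier: "indrep n k x \<in> carrier_mat (dd n) (dd n)"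
  by (simp add: indrep_def)

lemma indrep_index: "i < dd n \<Longrightarrow> j < dd n \<Longrightarrow> indrep n k x $$ (i,j) =
  (if inv (ee n i) \<otimes> x \<otimes> ee n j \<in> cyc n then lam n k (inv (ee n i) \<otimes> x \<otimes> ee n j) else 0)"
  by (simp add: indrep_def)

lemma indrep_one: "indrep n k \<one> = 1\<^sub>m (dd n)"
proof (rule eq_matI)
  fix i j assume "i < dim_row (1\<^sub>m (dd n))" "j < dim_col (1\<^sub>m (dd n))"
  then have i: "i < dd n" and j: "j < dd n" by auto
  have ei: "ee n i \<in> carrier G" using ee_carrier[OF fin n i] .
  have Ji: "Jx n (ee n i) = i"
    using Jx(3)[OF fin n ei i lcos_refl[OF fin n ei]] by simp
  have "inv (ee n i) \<otimes> \<one> \<otimes> ee n j \<in> cyc n \<longleftrightarrow> j = i"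
    using key_iff[OF fin n i j one_closed] ei Ji by simp
  then show "indrep n k \<one> $$ (i, j) = 1\<^sub>m (dd n) $$ (i, j)"
    using i j ei by (auto simp: indrep_index lam_one[OF fin n])
qed (auto simp: indrep_def)

lemma indrep_mult: assumes x: "x \<in> carrier G" and y: "y \<in> carrier G"
  shows "indrep n k (x \<otimes> y) = indrep n k x * indrep n k y"
proof (rule eq_matI)
  fix i l assume "i < dim_row (indrep n k x * indrep n k y)" "l < dim_col (indrep n k x * indrep n k y)"
  then have i: "i < dd n" and l: "l < dd n" by (auto simp: indrep_def)
  define j0 where "j0 = Jx n (inv x \<otimes> ee n i)"
  have ei: "ee n i \<in> carrier G" using ee_carrier[OF fin n i] .
  have el: "ee n l \<in> carrier G" using ee_carrier[OF fin n l] .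
  have j0: "j0 < dd n" unfolding j0_def using Jx(1)[OF fin n] x ei by simp
  have ej: "ee n j0 \<in> carrier G" using ee_carrier[OF fin n j0] .
  define a where "a = inv (ee n i) \<otimes> x \<otimes> ee n j0"
  define b where "b = inv (ee n j0) \<otimes> y \<otimes> ee n l"
  define c where "c = inv (ee n i) \<otimes> (x \<otimes> y) \<otimes> ee n l"
  have a: "a \<in> cyc n" unfolding a_def using key_iff[OF fin n i j0 x] j0_def by simp
  have ac: "a \<in> carrier G" and bc: "b \<in> carrier G" using x y ei ej el by (auto simp: a_def b_def)
  have abc: "a \<otimes> b = c" using x y ei ej el by (simp add: a_def b_def c_def m_assoc)
  have "(indrep n k x * indrep n k y) $$ (i, l) = (\<Sum>j\<in>{0..<dd n}. indrep n k x $$ (i,j) * indrep n k y $$ (j,l))"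
    using i l by (simp add: indrep_def scalar_prod_def)
  also have "\<dots> = indrep n k x $$ (i,j0) * indrep n k y $$ (j0,l)
      + (\<Sum>j\<in>{0..<dd n} - {j0}. indrep n k x $$ (i,j) * indrep n k y $$ (j,l))"
    using j0 by (subst sum.remove[of _ j0]) auto
  also have "(\<Sum>j\<in>{0..<dd n} - {j0}. indrep n k x $$ (i,j) * indrep n k y $$ (j,l)) = 0"
  proof (rule sum.neutral, rule ballI)
    fix j assume j: "j \<in> {0..<dd n} - {j0}"
    then have "inv (ee n i) \<otimes> x \<otimes> ee n j \<notin> cyc n" using key_iff[OF fin n i _ x] j0_def by auto
    then show "indrep n k x $$ (i,j) * indrep n k y $$ (j,l) = 0" using i j by (simp add: indrep_index)
  qed
  also have "indrep n k x $$ (i,j0) * indrep n k y $$ (j0,l) + 0 = indrep n k (x \<otimes> y) $$ (i, l)"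
  proof (cases "b \<in> cyc n")
    case True
    then have "c \<in> cyc n" using abc cyc_mult[OF fin n a] by metis
    then show ?thesis using True a i l j0 abc lam_mult[OF fin n a True]
      by (simp add: indrep_index a_def[symmetric] b_def[symmetric] c_def[symmetric])
  next
    case False
    have "c \<notin> cyc n"
    proof
      assume "c \<in> cyc n"
      then have "inv a \<otimes> c \<in> cyc n" using cyc_mult[OF fin n cyc_inv[OF fin n a]] by blast
      moreover have "inv a \<otimes> c = b" using abc ac bc by (metis cancel_l2)
      ultimately show False using False by simp
    qed
    then show ?thesis using False i l j0
      by (simp add: indrep_index a_def[symmetric] b_def[symmetric] c_def[symmetric])
  qed
  finally show "indrep n k (x \<otimes> y) $$ (i, l) = (indrep n k x * indrep n k y) $$ (i, l)" by simp
qed (auto simp: indrep_def)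

lemma indrep_is_rep: "is_rep G (dd n) (indrep n k)"
  unfolding is_rep_def using indrep_carrier indrep_one indrep_mult by blast

lemma indrep_tr: "mat_tr (indrep n k x) = (\<Sum>i<dd n.
    if inv (ee n i) \<otimes> x \<otimes> ee n i \<in> cyc n then lam n k (inv (ee n i) \<otimes> x \<otimes> ee n i) else 0)"
  by (simp add: mat_tr_def indrep_def)

lemma zet_ord: "zet n ^ ord n = 1"
  using zet_pow_1_iff[OF fin n] n by simp

lemma geo: "(\<Sum>k<(ord n). (zet n ^ m) ^ k) = (if n [^] m = \<one> then of_nat (ord n) else 0)"
proof (cases "n [^] m = \<one>")
  case True
  then have "zet n ^ m = 1" using zet_pow_1_iff[OF fin n] by simp
  then show ?thesis using True by simp
next
  case False
  then have ne: "zet n ^ m \<noteq> 1" using zet_pow_1_iff[OF fin n] by simp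
  have "(zet n ^ m) ^ ord n = 1" using zet_ord by (metis power_mult mult.commute power_one)
  then show ?thesis using False ne by (simp add: sum_gp_strict)
qed

lemma cnj_zet: "cnj (zet n) = zet n ^ (ord n - 1)"
proof -
  have nz: "zet n \<noteq> 0" by (simp add: zet_def)
  have "zet n * zet n ^ (ord n - 1) = zet n ^ ord n" using ord_n_pos[OF fin n] by (cases "ord n") auto
  then have a: "zet n ^ (ord n - 1) = 1 / zet n" using zet_ord nz by (simp add: field_simps)
  have "zet n * cnj (zet n) = complex_of_real ((norm (zet n))\<^sup>2)" by (rule complex_norm_square[symmetric])
  then have "zet n * cnj (zet n) = 1" by (simp add: zet_def)
  then have b: "cnj (zet n) = 1 / zet n" using nz by (simp add: field_simps)
  show ?thesis unfolding a b ..
qed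

lemma sumA: assumes h: "h \<in> cyc n"
  shows "(\<Sum>k<(ord n). cnj (zet n ^ k) * lam n k h) = (if h = n then of_nat (ord n) else 0)"
proof -
  obtain j where hj: "h = n [^] (j::nat)" using h by (auto simp: cyc_def)
  have "(\<Sum>k<(ord n). cnj (zet n ^ k) * lam n k h) = (\<Sum>k<(ord n). (zet n ^ (ord n - 1 + j)) ^ k)"
    unfolding hj lam_pow[OF fin n]
  proof (intro sum.cong refl)
    fix k
    have "(zet n ^ (ord n - 1 + j)) ^ k = (zet n ^ (ord n - 1)) ^ k * (zet n ^ j) ^ k"
      by (simp only: power_add power_mult_distrib)
    also have "(zet n ^ (ord n - 1)) ^ k = cnj (zet n ^ k)" by (simp add: cnj_zet)
    also have "(zet n ^ j) ^ k = zet n ^ (k * j)" by (metis power_mult mult.commute)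
    finally show "cnj (zet n ^ k) * zet n ^ (k * j) = (zet n ^ (ord n - 1 + j)) ^ k" by simp
  qed
  also have "\<dots> = (if n [^] (ord n - 1 + j) = \<one> then of_nat (ord n) else 0)" by (rule geo)
  also have "n [^] (ord n - 1 + j) = inv n \<otimes> h"
    using inv_as_pow[OF fin n] hj n by (simp add: nat_pow_mult)
  also have "inv n \<otimes> h = \<one> \<longleftrightarrow> h = n"
  proof
    have hc: "h \<in> carrier G" using cyc_closed[OF fin n h] .
    assume a: "inv n \<otimes> h = \<one>"
    have "h = n \<otimes> (inv n \<otimes> h)" using n hc by simp
    then show "h = n" using a n by simp
  next
    assume "h = n" then show "inv n \<otimes> h = \<one>" using n by simp
  qed
  finally show ?thesis by simp
qed

lemma sumB: assumes h: "h \<in> cyc n"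
  shows "(\<Sum>k<(ord n). cnj (zet n ^ k) * cnj (lam n k h)) = (if h = inv n then of_nat (ord n) else 0)"
proof -
  obtain j where hj: "h = n [^] (j::nat)" using h by (auto simp: cyc_def)
  have "(\<Sum>k<(ord n). cnj (zet n ^ k) * cnj (lam n k h)) = cnj (\<Sum>k<(ord n). (zet n ^ (1 + j)) ^ k)"
    unfolding hj lam_pow[OF fin n] cnj_sum
  proof (intro sum.cong refl)
    fix k
    have "(zet n ^ (1 + j)) ^ k = zet n ^ k * (zet n ^ j) ^ k"
      by (simp only: power_add power_mult_distrib power_one_right)
    also have "(zet n ^ j) ^ k = zet n ^ (k * j)" by (metis power_mult mult.commute)
    finally show "cnj (zet n ^ k) * cnj (zet n ^ (k * j)) = cnj ((zet n ^ (1 + j)) ^ k)" by simp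
  qed
  also have "(\<Sum>k<(ord n). (zet n ^ (1 + j)) ^ k) = (if n [^] (1 + j) = \<one> then of_nat (ord n) else 0)"
    by (rule geo)
  also have "n [^] (1 + j) = n \<otimes> h"
    using hj n by (metis nat_pow_Suc2 plus_1_eq_Suc)
  also have "n \<otimes> h = \<one> \<longleftrightarrow> h = inv n"
  proof
    have hc: "h \<in> carrier G" using cyc_closed[OF fin n h] .
    assume "n \<otimes> h = \<one>"
    then have "h \<otimes> n = \<one>" using inv_comm n hc by blast
    from inv_equality[OF this n hc] show "h = inv n" by simp
  next
    assume "h = inv n" then show "n \<otimes> h = \<one>" using n by simp
  qed
  finally show ?thesis by simp
qed

lemma cnt_sum: "(\<Sum>i<(d::nat). if P i then (c::complex) else 0) = c * of_nat (card {i. i < d \<and> P i})"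
proof -
  have "(\<Sum>i<d. if P i then c else 0) = (\<Sum>i\<in>{i\<in>{..<d}. P i}. c)"
    by (rule sum.inter_filter[symmetric]) simp
  also have "{i\<in>{..<d}. P i} = {i. i < d \<and> P i}" by auto
  also have "(\<Sum>i\<in>{i. i < d \<and> P i}. c) = of_nat (card {i. i < d \<and> P i}) * c" by (rule sum_constant)
  also have "\<dots> = c * of_nat (card {i. i < d \<and> P i})" by (rule mult.commute)
  finally show ?thesis .
qed

lemma S_complex: assumes x: "x \<in> carrier G"
  shows "(\<Sum>k<(ord n). cnj (zet n ^ k) * mat_tr (indrep n k x))
       = of_nat (ord n) * of_nat (card {i. i < dd n \<and> inv (ee n i) \<otimes> x \<otimes> ee n i = n})"
proof -
  let ?h = "\<lambda>i. inv (ee n i) \<otimes> x \<otimes> ee n i"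
  have "(\<Sum>k<(ord n). cnj (zet n ^ k) * mat_tr (indrep n k x))
     = (\<Sum>k<(ord n). \<Sum>i<dd n. cnj (zet n ^ k) * (if ?h i \<in> cyc n then lam n k (?h i) else 0))"
    by (simp add: indrep_tr sum_distrib_left)
  also have "\<dots> = (\<Sum>i<dd n. \<Sum>k<(ord n). cnj (zet n ^ k) * (if ?h i \<in> cyc n then lam n k (?h i) else 0))"
    by (rule sum.swap)
  also have "\<dots> = (\<Sum>i<dd n. if ?h i = n then of_nat (ord n) else 0)"
  proof (intro sum.cong refl)
    fix i
    show "(\<Sum>k<(ord n). cnj (zet n ^ k) * (if ?h i \<in> cyc n then lam n k (?h i) else 0))
      = (if ?h i = n then of_nat (ord n) else 0)"
    proof (cases "?h i \<in> cyc n")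
      case True then show ?thesis using sumA[of "?h i"] by simp
    next
      case False then have "?h i \<noteq> n" using n_cyc[OF fin n] by auto
      then show ?thesis using False by simp
    qed
  qed
  also have "\<dots> = of_nat (ord n) * of_nat (card {i. i < dd n \<and> ?h i = n})"
    by (rule cnt_sum)
  finally show ?thesis .
qed

lemma S_real: assumes x: "x \<in> carrier G"
  shows "(\<Sum>k<(ord n). cnj (zet n ^ k) * (mat_tr (indrep n k x) + cnj (mat_tr (indrep n k x))))
       = of_nat (ord n) * (of_nat (card {i. i < dd n \<and> inv (ee n i) \<otimes> x \<otimes> ee n i = n})
          + of_nat (card {i. i < dd n \<and> inv (ee n i) \<otimes> x \<otimes> ee n i = inv n}))"
proof -
  let ?h = "\<lambda>i. inv (ee n i) \<otimes> x \<otimes> ee n i"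
  have "(\<Sum>k<(ord n). cnj (zet n ^ k) * cnj (mat_tr (indrep n k x)))
     = (\<Sum>k<(ord n). \<Sum>i<dd n. cnj (zet n ^ k) * (if ?h i \<in> cyc n then cnj (lam n k (?h i)) else 0))"
  proof -
    have "cnj (mat_tr (indrep n k x)) = (\<Sum>i<dd n. if ?h i \<in> cyc n then cnj (lam n k (?h i)) else 0)" for k
      unfolding indrep_tr cnj_sum by (intro sum.cong refl) simp
    then show ?thesis by (simp add: sum_distrib_left)
  qed
  also have "\<dots> = (\<Sum>i<dd n. \<Sum>k<(ord n). cnj (zet n ^ k) * (if ?h i \<in> cyc n then cnj (lam n k (?h i)) else 0))"
    by (rule sum.swap)
  also have "\<dots> = (\<Sum>i<dd n. if ?h i = inv n then of_nat (ord n) else 0)"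
  proof (intro sum.cong refl)
    fix i
    show "(\<Sum>k<(ord n). cnj (zet n ^ k) * (if ?h i \<in> cyc n then cnj (lam n k (?h i)) else 0))
      = (if ?h i = inv n then of_nat (ord n) else 0)"
    proof (cases "?h i \<in> cyc n")
      case True then show ?thesis using sumB[of "?h i"] by simp
    next
      case False then have "?h i \<noteq> inv n" using cyc_inv[OF fin n n_cyc[OF fin n]] by auto
      then show ?thesis using False by simp
    qed
  qed
  also have "\<dots> = of_nat (ord n) * of_nat (card {i. i < dd n \<and> ?h i = inv n})"
    by (rule cnt_sum)
  finally have B: "(\<Sum>k<(ord n). cnj (zet n ^ k) * cnj (mat_tr (indrep n k x)))
     = of_nat (ord n) * of_nat (card {i. i < dd n \<and> ?h i = inv n})" .
  show ?thesis
    using S_complex[OF x] B by (simp add: distrib_left sum.distrib)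
qed

lemma cnt_pos: "card {i. i < dd n \<and> inv (ee n i) \<otimes> n \<otimes> ee n i = n} > 0"
proof -
  define i where "i = Jx n \<one>"
  have i: "i < dd n" unfolding i_def by (rule Jx(1)[OF fin n one_closed])
  have l: "\<one> \<in> lcos n (ee n i)" unfolding i_def by (rule Jx(2)[OF fin n one_closed])
  have ei: "ee n i \<in> carrier G" using ee_carrier[OF fin n i] .
  have "inv (ee n i) \<in> cyc n" using l ei by (simp add: lcos_def)
  then have "inv (inv (ee n i)) \<in> cyc n" using cyc_inv[OF fin n] by blast
  then have c: "ee n i \<in> cyc n" using ei by simp
  have "inv (ee n i) \<otimes> n \<otimes> ee n i = inv (ee n i) \<otimes> (ee n i \<otimes> n)"
    using cyc_comm[OF fin n c] ei n by (simp add: m_assoc)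
  also have "\<dots> = n" using ei n by simp
  finally have "i \<in> {i. i < dd n \<and> inv (ee n i) \<otimes> n \<otimes> ee n i = n}" using i by simp
  moreover have "finite {i. i < dd n \<and> inv (ee n i) \<otimes> n \<otimes> ee n i = n}" by simp
  ultimately show ?thesis using card_gt_0_iff by blast
qed

lemma conj_back: assumes e: "e \<in> carrier G" and x: "x \<in> carrier G" and y: "y \<in> carrier G"
  and h: "inv e \<otimes> x \<otimes> e = y" shows "x = e \<otimes> y \<otimes> inv e"
proof -
  have "e \<otimes> y \<otimes> inv e = e \<otimes> (inv e \<otimes> x \<otimes> e) \<otimes> inv e" using h by simp
  also have "\<dots> = x" using e x by (simp add: m_assoc)
  finally show ?thesis by simp
qed

end

end

context group
begin

lemma realify_rep: assumes r: "is_rep G d \<rho>" shows "is_rep G (2*d) (\<lambda>x. realify (\<rho> x))"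
  unfolding is_rep_def
proof (intro conjI ballI)
  fix x assume x: "x \<in> carrier G"
  show "realify (\<rho> x) \<in> carrier_mat (2 * d) (2 * d)" using realify_carrier rep_carrier[OF r x] .
next
  show "realify (\<rho> \<one>) = 1\<^sub>m (2 * d)" using rep_one[OF r] realify_one by simp
next
  fix x y assume x: "x \<in> carrier G" and y: "y \<in> carrier G"
  show "realify (\<rho> (x \<otimes> y)) = realify (\<rho> x) * realify (\<rho> y)"
    using rep_mult[OF r x y] realify_mult[OF rep_carrier[OF r x] rep_carrier[OF r y]] by simp
qed

context
  fixes n assumes fin: "finite (carrier G)" and n: "n \<in> carrier G"
begin

lemma ind_char: "(\<lambda>x. if x \<in> carrier G then mat_tr (indrep n k x) else 0) \<in> complex_characters G"
  unfolding complex_characters_def using indrep_is_rep[OF fin n] by blast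

lemma ind_rchar: "(\<lambda>x. if x \<in> carrier G then complex_of_real (mat_tr (realify (indrep n k x))) else 0)
    \<in> real_characters G"
  unfolding real_characters_def using realify_rep[OF indrep_is_rep[OF fin n]] by blast

lemma sep_complex: assumes m: "m \<in> carrier G"
  and eq: "\<forall>\<chi>\<in>complex_characters G. \<chi> n = \<chi> m"
  shows "\<exists>k\<in>carrier G. m = k \<otimes> n \<otimes> inv k"
proof -
  have tr: "mat_tr (indrep n k n) = mat_tr (indrep n k m)" for k
    using eq ind_char[of k] n m by force
  have "of_nat (ord n) * of_nat (card {i. i < dd n \<and> inv (ee n i) \<otimes> n \<otimes> ee n i = n})
      = (of_nat (ord n) * of_nat (card {i. i < dd n \<and> inv (ee n i) \<otimes> m \<otimes> ee n i = n}) :: complex)"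
    using S_complex[OF fin n n] S_complex[OF fin n m] tr by simp
  then have "card {i. i < dd n \<and> inv (ee n i) \<otimes> n \<otimes> ee n i = n}
      = card {i. i < dd n \<and> inv (ee n i) \<otimes> m \<otimes> ee n i = n}"
    using ord_n_pos[OF fin n] by (simp del: of_nat_mult add: of_nat_mult[symmetric])
  then have "card {i. i < dd n \<and> inv (ee n i) \<otimes> m \<otimes> ee n i = n} > 0" using cnt_pos[OF fin n] by simp
  then obtain i where i: "i < dd n" "inv (ee n i) \<otimes> m \<otimes> ee n i = n"
    by (metis (mono_tags, lifting) card.empty empty_Collect_eq less_irrefl)
  have ei: "ee n i \<in> carrier G" using ee_carrier[OF fin n i(1)] .
  show ?thesis using conj_back[OF fin n ei m n i(2)] ei by blast
qed

lemma sep_real: assumes m: "m \<in> carrier G"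
  and eq: "\<forall>\<chi>\<in>real_characters G. \<chi> n = \<chi> m"
  shows "\<exists>k\<in>carrier G. m = k \<otimes> n \<otimes> inv k \<or> m = k \<otimes> inv n \<otimes> inv k"
proof -
  have "complex_of_real (mat_tr (realify (indrep n k n))) = complex_of_real (mat_tr (realify (indrep n k m)))" for k
    using eq ind_rchar[of k] n m by force
  then have tr: "mat_tr (indrep n k n) + cnj (mat_tr (indrep n k n)) = mat_tr (indrep n k m) + cnj (mat_tr (indrep n k m))" for k
    using realify_tr[OF indrep_carrier[OF fin n]] by metis
  define A where "A = (\<lambda>x y. card {i. i < dd n \<and> inv (ee n i) \<otimes> x \<otimes> ee n i = y})"
  have "of_nat (ord n) * (of_nat (A n n) + of_nat (A n (inv n)))
      = (of_nat (ord n) * (of_nat (A m n) + of_nat (A m (inv n))) :: complex)"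
    using S_real[OF fin n n] S_real[OF fin n m] tr unfolding A_def by simp
  then have "A n n + A n (inv n) = A m n + A m (inv n)"
    using ord_n_pos[OF fin n] by (simp del: of_nat_mult of_nat_add add: of_nat_mult[symmetric] of_nat_add[symmetric])
  moreover have "A n n > 0" using cnt_pos[OF fin n] by (simp add: A_def)
  ultimately have "A m n > 0 \<or> A m (inv n) > 0" by linarith
  then show ?thesis
  proof
    assume "A m n > 0"
    then obtain i where i: "i < dd n" "inv (ee n i) \<otimes> m \<otimes> ee n i = n"
      unfolding A_def by (metis (mono_tags, lifting) card.empty empty_Collect_eq less_irrefl)
    have ei: "ee n i \<in> carrier G" using ee_carrier[OF fin n i(1)] .
    show ?thesis using conj_back[OF fin n ei m n i(2)] ei by blast
  next
    assume "A m (inv n) > 0"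
    then obtain i where i: "i < dd n" "inv (ee n i) \<otimes> m \<otimes> ee n i = inv n"
      unfolding A_def by (metis (mono_tags, lifting) card.empty empty_Collect_eq less_irrefl)
    have ei: "ee n i \<in> carrier G" using ee_carrier[OF fin n i(1)] .
    show ?thesis using conj_back[OF fin n ei m _ i(2)] ei n by blast
  qed
qed

end

end

context normal
begin

lemma sg: "subgroup H G" by (rule subgroup_axioms)

lemma K_group: "group (G\<lparr>carrier := H\<rparr>)"
  using subgroup_is_group[OF is_group] .

lemma K_inv: "x \<in> H \<Longrightarrow> inv\<^bsub>G\<lparr>carrier := H\<rparr>\<^esub> x = inv x"
  using m_inv_consistent[OF sg] by simp

lemma conj_in: "g \<in> carrier G \<Longrightarrow> z \<in> carrier G \<Longrightarrow> g \<otimes> z \<otimes> inv g \<in> H \<longleftrightarrow> z \<in> H"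
proof
  assume g: "g \<in> carrier G" and z: "z \<in> carrier G" and h: "g \<otimes> z \<otimes> inv g \<in> H"
  have "inv g \<otimes> (g \<otimes> z \<otimes> inv g) \<otimes> g \<in> H" using inv_op_closed1[OF g h] .
  also have "inv g \<otimes> (g \<otimes> z \<otimes> inv g) \<otimes> g = z" using g z by (simp add: m_assoc)
  finally show "z \<in> H" .
next
  assume "g \<in> carrier G" "z \<in> H" then show "g \<otimes> z \<otimes> inv g \<in> H" by (rule inv_op_closed2)
qed

lemma conj_mult: "g \<in> carrier G \<Longrightarrow> x \<in> carrier G \<Longrightarrow> y \<in> carrier G \<Longrightarrow>
  g \<otimes> (x \<otimes> y) \<otimes> inv g = (g \<otimes> x \<otimes> inv g) \<otimes> (g \<otimes> y \<otimes> inv g)"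
  by (simp add: m_assoc)

lemma conj_rep: assumes r: "is_rep (G\<lparr>carrier := H\<rparr>) d \<rho>" and g: "g \<in> carrier G"
  shows "is_rep (G\<lparr>carrier := H\<rparr>) d (\<lambda>x. \<rho> (g \<otimes> x \<otimes> inv g))"
proof -
  have c: "\<forall>x\<in>H. \<rho> x \<in> carrier_mat d d" and o: "\<rho> \<one> = 1\<^sub>m d"
    and m: "\<forall>x\<in>H. \<forall>y\<in>H. \<rho> (x \<otimes> y) = \<rho> x * \<rho> y" using r by (auto simp: is_rep_def)
  have 1: "\<forall>x\<in>H. \<rho> (g \<otimes> x \<otimes> inv g) \<in> carrier_mat d d" using c inv_op_closed2[OF g] by blast
  have 2: "\<rho> (g \<otimes> \<one> \<otimes> inv g) = 1\<^sub>m d" using g o by simp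
  have 3: "\<forall>x\<in>H. \<forall>y\<in>H. \<rho> (g \<otimes> (x \<otimes> y) \<otimes> inv g) = \<rho> (g \<otimes> x \<otimes> inv g) * \<rho> (g \<otimes> y \<otimes> inv g)"
    using conj_mult[OF g] m inv_op_closed2[OF g] by simp
  show ?thesis unfolding is_rep_def using 1 2 3 by simp
qed

definition conjf :: "'a \<Rightarrow> ('a \<Rightarrow> complex) \<Rightarrow> 'a \<Rightarrow> complex" where
  "conjf g f = (\<lambda>x. if x \<in> H then f (g \<otimes> x \<otimes> inv g) else 0)"

lemma cchar_form: assumes "\<chi> \<in> complex_characters (G\<lparr>carrier := H\<rparr>)"
  obtains d \<rho> where "is_rep (G\<lparr>carrier := H\<rparr>) d \<rho>" "\<chi> = (\<lambda>x. if x \<in> H then mat_tr (\<rho> x) else 0)"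
  using assms unfolding complex_characters_def by auto

lemma rchar_form: assumes "\<chi> \<in> real_characters (G\<lparr>carrier := H\<rparr>)"
  obtains d \<rho> where "is_rep (G\<lparr>carrier := H\<rparr>) d \<rho>"
    "\<chi> = (\<lambda>x. if x \<in> H then complex_of_real (mat_tr (\<rho> x)) else 0)"
  using assms unfolding real_characters_def by auto

lemma cchar_conj: assumes chi: "\<chi> \<in> complex_characters (G\<lparr>carrier := H\<rparr>)" and g: "g \<in> carrier G"
  shows "conjf g \<chi> \<in> complex_characters (G\<lparr>carrier := H\<rparr>)"
proof -
  obtain d \<rho> where r: "is_rep (G\<lparr>carrier := H\<rparr>) d \<rho>" and e: "\<chi> = (\<lambda>x. if x \<in> H then mat_tr (\<rho> x) else 0)"
    using cchar_form[OF chi] by blast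
  have "conjf g \<chi> = (\<lambda>x. if x \<in> H then mat_tr (\<rho> (g \<otimes> x \<otimes> inv g)) else 0)"
    unfolding conjf_def e using inv_op_closed2[OF g] by auto
  then show ?thesis unfolding complex_characters_def using conj_rep[OF r g] by auto
qed

lemma rchar_conj: assumes chi: "\<chi> \<in> real_characters (G\<lparr>carrier := H\<rparr>)" and g: "g \<in> carrier G"
  shows "conjf g \<chi> \<in> real_characters (G\<lparr>carrier := H\<rparr>)"
proof -
  obtain d \<rho> where r: "is_rep (G\<lparr>carrier := H\<rparr>) d \<rho>"
    and e: "\<chi> = (\<lambda>x. if x \<in> H then complex_of_real (mat_tr (\<rho> x)) else 0)"
    using rchar_form[OF chi] by blast
  have "conjf g \<chi> = (\<lambda>x. if x \<in> H then complex_of_real (mat_tr (\<rho> (g \<otimes> x \<otimes> inv g))) else 0)"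
    unfolding conjf_def e using inv_op_closed2[OF g] by auto
  then show ?thesis unfolding real_characters_def using conj_rep[OF r g] by auto
qed

lemma zero_rep: "is_rep (G\<lparr>carrier := H\<rparr>) 0 (\<lambda>_. 1\<^sub>m 0 :: 'f::field mat)"
  unfolding is_rep_def by simp

lemma cchar_R: assumes "\<chi> \<in> complex_characters (G\<lparr>carrier := H\<rparr>)"
  shows "\<chi> \<in> R (G\<lparr>carrier := H\<rparr>)"
proof -
  have "(\<lambda>x. 0) = (\<lambda>x. if x \<in> carrier (G\<lparr>carrier := H\<rparr>) then mat_tr (1\<^sub>m 0 :: complex mat) else 0)"
    by (rule ext) (simp add: Defs.mat_tr_def)
  then have z: "(\<lambda>x. 0) \<in> complex_characters (G\<lparr>carrier := H\<rparr>)"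
    unfolding complex_characters_def using zero_rep by blast
  show ?thesis unfolding R_def mem_Collect_eq
    by (rule exI[of _ \<chi>], rule exI[of _ "\<lambda>x. 0"]) (simp add: assms z)
qed

lemma rchar_RO: assumes "\<chi> \<in> real_characters (G\<lparr>carrier := H\<rparr>)"
  shows "\<chi> \<in> RO (G\<lparr>carrier := H\<rparr>)"
proof -
  have "(\<lambda>x. 0) = (\<lambda>x. if x \<in> carrier (G\<lparr>carrier := H\<rparr>) then complex_of_real (mat_tr (1\<^sub>m 0 :: real mat)) else 0)"
    by (rule ext) (simp add: Defs.mat_tr_def)
  then have z: "(\<lambda>x. 0) \<in> real_characters (G\<lparr>carrier := H\<rparr>)"
    unfolding real_characters_def using zero_rep by blast
  show ?thesis unfolding RO_def mem_Collect_eq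
    by (rule exI[of _ \<chi>], rule exI[of _ "\<lambda>x. 0"]) (simp add: assms z)
qed

lemma Ind_conjf: assumes g: "g \<in> carrier G" shows "Ind G H (conjf g f) = Ind G H f"
proof
  fix y
  show "Ind G H (conjf g f) y = Ind G H f y"
  proof (cases "y \<in> carrier G")
    case False then show ?thesis by (simp add: Ind_def)
  next
    case y: True
    have key: "(if g \<otimes> a \<otimes> y \<otimes> inv (g \<otimes> a) \<in> H then f (g \<otimes> a \<otimes> y \<otimes> inv (g \<otimes> a)) else 0)
          = (if a \<otimes> y \<otimes> inv a \<in> H then conjf g f (a \<otimes> y \<otimes> inv a) else 0)" if a: "a \<in> carrier G" for a
    proof -
      have e: "g \<otimes> a \<otimes> y \<otimes> inv (g \<otimes> a) = g \<otimes> (a \<otimes> y \<otimes> inv a) \<otimes> inv g"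
        using a g y by (simp add: m_assoc inv_mult_group)
      have c: "a \<otimes> y \<otimes> inv a \<in> carrier G" using a y by simp
      show ?thesis unfolding e conjf_def using conj_in[OF g c] by simp
    qed
    have "(\<Sum>x\<in>carrier G. if x \<otimes> y \<otimes> inv x \<in> H then conjf g f (x \<otimes> y \<otimes> inv x) else 0)
        = (\<Sum>x\<in>carrier G. if x \<otimes> y \<otimes> inv x \<in> H then f (x \<otimes> y \<otimes> inv x) else 0)"
      by (rule sum.reindex_bij_witness[where i = "\<lambda>z. inv g \<otimes> z" and j = "\<lambda>z. g \<otimes> z"])
        (use g key in auto)
    then show ?thesis by (simp add: Ind_def)
  qed
qed

lemma Ind_scale: assumes y: "y \<in> H" and inv: "\<forall>x\<in>carrier G. f (x \<otimes> y \<otimes> inv x) = f y"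
  shows "Ind G H f y = of_nat (card (carrier G)) / of_nat (card H) * f y"
proof -
  have yc: "y \<in> carrier G" using y by simp
  have "(\<Sum>x\<in>carrier G. if x \<otimes> y \<otimes> inv x \<in> H then f (x \<otimes> y \<otimes> inv x) else 0)
      = (\<Sum>x\<in>carrier G. f y)"
    using inv inv_op_closed2[OF _ y] by (intro sum.cong refl) auto
  then show ?thesis using yc by (simp add: Ind_def)
qed

end

context normal
begin

lemma conj_H: "x \<in> H \<Longrightarrow> k \<in> H \<Longrightarrow> k \<otimes> x \<otimes> inv k \<in> H"
  by (simp add: m_closed m_inv_closed)

lemma cchar_props: assumes chi: "\<chi> \<in> complex_characters (G\<lparr>carrier := H\<rparr>)"
  shows "\<forall>x. x \<notin> H \<longrightarrow> \<chi> x = 0" "\<forall>x\<in>H. \<forall>k\<in>H. \<chi> (k \<otimes> x \<otimes> inv k) = \<chi> x"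
proof -
  obtain d \<rho> where r: "is_rep (G\<lparr>carrier := H\<rparr>) d \<rho>" and e: "\<chi> = (\<lambda>x. if x \<in> H then mat_tr (\<rho> x) else 0)"
    using cchar_form[OF chi] by blast
  show "\<forall>x. x \<notin> H \<longrightarrow> \<chi> x = 0" using e by simp
  show "\<forall>x\<in>H. \<forall>k\<in>H. \<chi> (k \<otimes> x \<otimes> inv k) = \<chi> x"
  proof (intro ballI)
    fix x k assume x: "x \<in> H" and k: "k \<in> H"
    have "mat_tr (\<rho> (k \<otimes>\<^bsub>G\<lparr>carrier := H\<rparr>\<^esub> x \<otimes>\<^bsub>G\<lparr>carrier := H\<rparr>\<^esub> inv\<^bsub>G\<lparr>carrier := H\<rparr>\<^esub> k)) = mat_tr (\<rho> x)"
      using group.rep_conj_tr[OF K_group r] x k by simp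
    then show "\<chi> (k \<otimes> x \<otimes> inv k) = \<chi> x" using e x k conj_H K_inv by simp
  qed
qed

lemma rchar_props: assumes fin: "finite (carrier G)" and chi: "\<chi> \<in> real_characters (G\<lparr>carrier := H\<rparr>)"
  shows "\<forall>x. x \<notin> H \<longrightarrow> \<chi> x = 0" "\<forall>x\<in>H. \<forall>k\<in>H. \<chi> (k \<otimes> x \<otimes> inv k) = \<chi> x"
    "\<forall>x\<in>H. \<chi> (inv x) = \<chi> x"
proof -
  obtain d \<rho> where r: "is_rep (G\<lparr>carrier := H\<rparr>) d \<rho>"
    and e: "\<chi> = (\<lambda>x. if x \<in> H then complex_of_real (mat_tr (\<rho> x)) else 0)"
    using rchar_form[OF chi] by blast
  have finH: "finite (carrier (G\<lparr>carrier := H\<rparr>))" using fin finite_subset subset by auto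
  show "\<forall>x. x \<notin> H \<longrightarrow> \<chi> x = 0" using e by simp
  show "\<forall>x\<in>H. \<forall>k\<in>H. \<chi> (k \<otimes> x \<otimes> inv k) = \<chi> x"
  proof (intro ballI)
    fix x k assume x: "x \<in> H" and k: "k \<in> H"
    have "mat_tr (\<rho> (k \<otimes>\<^bsub>G\<lparr>carrier := H\<rparr>\<^esub> x \<otimes>\<^bsub>G\<lparr>carrier := H\<rparr>\<^esub> inv\<^bsub>G\<lparr>carrier := H\<rparr>\<^esub> k)) = mat_tr (\<rho> x)"
      using group.rep_conj_tr[OF K_group r] x k by simp
    then show "\<chi> (k \<otimes> x \<otimes> inv k) = \<chi> x" using e x k conj_H K_inv by simp
  qed
  show "\<forall>x\<in>H. \<chi> (inv x) = \<chi> x"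
  proof
    fix x assume x: "x \<in> H"
    have "mat_tr (\<rho> (inv\<^bsub>G\<lparr>carrier := H\<rparr>\<^esub> x)) = mat_tr (\<rho> x)"
      using group.real_rep_inv_tr[OF K_group finH r] x by simp
    then show "\<chi> (inv x) = \<chi> x" using e x K_inv m_inv_closed by simp
  qed
qed

lemma R_props: assumes f: "f \<in> R (G\<lparr>carrier := H\<rparr>)"
  shows "\<forall>x. x \<notin> H \<longrightarrow> f x = 0" "\<forall>x\<in>H. \<forall>k\<in>H. f (k \<otimes> x \<otimes> inv k) = f x"
proof -
  obtain \<chi> \<psi> where f: "f = (\<lambda>x. \<chi> x - \<psi> x)" and c: "\<chi> \<in> complex_characters (G\<lparr>carrier := H\<rparr>)"
    "\<psi> \<in> complex_characters (G\<lparr>carrier := H\<rparr>)" using f unfolding R_def by blast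
  show "\<forall>x. x \<notin> H \<longrightarrow> f x = 0" using cchar_props(1)[OF c(1)] cchar_props(1)[OF c(2)] f by simp
  show "\<forall>x\<in>H. \<forall>k\<in>H. f (k \<otimes> x \<otimes> inv k) = f x" using cchar_props(2)[OF c(1)] cchar_props(2)[OF c(2)] f by simp
qed

lemma RO_props: assumes fin: "finite (carrier G)" and f: "f \<in> RO (G\<lparr>carrier := H\<rparr>)"
  shows "\<forall>x. x \<notin> H \<longrightarrow> f x = 0" "\<forall>x\<in>H. \<forall>k\<in>H. f (k \<otimes> x \<otimes> inv k) = f x"
    "\<forall>x\<in>H. f (inv x) = f x"
proof -
  obtain \<chi> \<psi> where f: "f = (\<lambda>x. \<chi> x - \<psi> x)" and c: "\<chi> \<in> real_characters (G\<lparr>carrier := H\<rparr>)"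
    "\<psi> \<in> real_characters (G\<lparr>carrier := H\<rparr>)" using f unfolding RO_def by blast
  show "\<forall>x. x \<notin> H \<longrightarrow> f x = 0" using rchar_props(1)[OF fin c(1)] rchar_props(1)[OF fin c(2)] f by simp
  show "\<forall>x\<in>H. \<forall>k\<in>H. f (k \<otimes> x \<otimes> inv k) = f x"
    using rchar_props(2)[OF fin c(1)] rchar_props(2)[OF fin c(2)] f by simp
  show "\<forall>x\<in>H. f (inv x) = f x"
    using rchar_props(3)[OF fin c(1)] rchar_props(3)[OF fin c(2)] f by simp
qed

lemma card_pos: assumes fin: "finite (carrier G)"
  shows "of_nat (card (carrier G)) / of_nat (card H) \<noteq> (0::complex)"
proof -
  have "\<one> \<in> carrier G" by simp
  then have "card (carrier G) > 0" using fin by (auto simp: card_gt_0_iff)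
  moreover have finH: "finite H" using finite_subset[OF subset fin] .
  have "\<one> \<in> H" by (rule subgroup.one_closed[OF sg])
  then have "card H > 0" using finH card_gt_0_iff by blast
  ultimately show ?thesis by simp
qed

lemma inj_from_scale:
  assumes fin: "finite (carrier G)" and S: "S \<subseteq> {f. (\<forall>x. x \<notin> H \<longrightarrow> f x = 0) \<and> (\<forall>y\<in>H. \<forall>x\<in>carrier G. f (x \<otimes> y \<otimes> inv x) = f y)}"
  shows "inj_on (Ind G H) S"
proof (rule inj_onI)
  fix f1 f2 assume f1S: "f1 \<in> S" and f2S: "f2 \<in> S" and eq: "Ind G H f1 = Ind G H f2"
  have f1: "(\<forall>x. x \<notin> H \<longrightarrow> f1 x = 0) \<and> (\<forall>y\<in>H. \<forall>x\<in>carrier G. f1 (x \<otimes> y \<otimes> inv x) = f1 y)"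
    using f1S S by blast
  have f2: "(\<forall>x. x \<notin> H \<longrightarrow> f2 x = 0) \<and> (\<forall>y\<in>H. \<forall>x\<in>carrier G. f2 (x \<otimes> y \<otimes> inv x) = f2 y)"
    using f2S S by blast
  show "f1 = f2"
  proof
    fix y show "f1 y = f2 y"
    proof (cases "y \<in> H")
      case False then show ?thesis using f1 f2 by simp
    next
      case True
      have "Ind G H f1 y = of_nat (card (carrier G)) / of_nat (card H) * f1 y"
        using Ind_scale[OF True] f1 True by blast
      moreover have "Ind G H f2 y = of_nat (card (carrier G)) / of_nat (card H) * f2 y"
        using Ind_scale[OF True] f2 True by blast
      ultimately show ?thesis using eq card_pos[OF fin] by simp
    qed
  qed
qed

lemma main1: assumes fin: "finite (carrier G)"
  shows "inj_on (Ind G H) (R (G\<lparr>carrier := H\<rparr>)) \<longleftrightarrow> (\<forall>n\<in>H. conj_class G (carrier G) n = conj_class G H n)"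
proof
  assume inj: "inj_on (Ind G H) (R (G\<lparr>carrier := H\<rparr>))"
  show "\<forall>n\<in>H. conj_class G (carrier G) n = conj_class G H n"
  proof
    fix n assume n: "n \<in> H"
    show "conj_class G (carrier G) n = conj_class G H n"
    proof
      show "conj_class G H n \<subseteq> conj_class G (carrier G) n" unfolding conj_class_def using subset by blast
      show "conj_class G (carrier G) n \<subseteq> conj_class G H n"
      proof
        fix z assume "z \<in> conj_class G (carrier G) n"
        then obtain g where g: "g \<in> carrier G" and z: "z = g \<otimes> n \<otimes> inv g" unfolding conj_class_def by blast
        have m: "z \<in> H" using z inv_op_closed2[OF g n] by simp
        have "\<forall>\<chi>\<in>complex_characters (G\<lparr>carrier := H\<rparr>). \<chi> n = \<chi> z"
        proof
          fix \<chi> assume chi: "\<chi> \<in> complex_characters (G\<lparr>carrier := H\<rparr>)"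
          have "conjf g \<chi> = \<chi>"
            using inj_onD[OF inj Ind_conjf[OF g] cchar_R[OF cchar_conj[OF chi g]] cchar_R[OF chi]] .
          then have "conjf g \<chi> n = \<chi> n" by simp
          then show "\<chi> n = \<chi> z" using n z by (simp add: conjf_def)
        qed
        from group.sep_complex[OF K_group _ _ _ this] n m fin finite_subset subset
        obtain k where "k \<in> H" "z = k \<otimes> n \<otimes> inv\<^bsub>G\<lparr>carrier := H\<rparr>\<^esub> k" by auto
        then show "z \<in> conj_class G H n" using K_inv unfolding conj_class_def by auto
      qed
    qed
  qed
next
  assume cl: "\<forall>n\<in>H. conj_class G (carrier G) n = conj_class G H n"
  show "inj_on (Ind G H) (R (G\<lparr>carrier := H\<rparr>))"
  proof (rule inj_from_scale[OF fin], intro subsetI CollectI conjI ballI)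
    fix f assume f: "f \<in> R (G\<lparr>carrier := H\<rparr>)"
    show "\<forall>x. x \<notin> H \<longrightarrow> f x = 0" using R_props(1)[OF f] .
    fix y x assume y: "y \<in> H" and x: "x \<in> carrier G"
    have "x \<otimes> y \<otimes> inv x \<in> conj_class G (carrier G) y" using x unfolding conj_class_def by blast
    then have "x \<otimes> y \<otimes> inv x \<in> conj_class G H y" using cl y by simp
    then obtain k where k: "k \<in> H" "x \<otimes> y \<otimes> inv x = k \<otimes> y \<otimes> inv k" unfolding conj_class_def by blast
    then show "f (x \<otimes> y \<otimes> inv x) = f y" using R_props(2)[OF f] y by simp
  qed
qed

lemma real_helper: assumes fin: "finite (carrier G)" and inj: "inj_on (Ind G H) (RO (G\<lparr>carrier := H\<rparr>))"
  and a: "a \<in> H" and g: "g \<in> carrier G"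
  shows "g \<otimes> a \<otimes> inv g \<in> conj_class G H a \<union> conj_class G H (inv a)"
proof -
  define z where "z = g \<otimes> a \<otimes> inv g"
  have m: "z \<in> H" using z_def inv_op_closed2[OF g a] by simp
  have "\<forall>\<chi>\<in>real_characters (G\<lparr>carrier := H\<rparr>). \<chi> a = \<chi> z"
  proof
    fix \<chi> assume chi: "\<chi> \<in> real_characters (G\<lparr>carrier := H\<rparr>)"
    have "conjf g \<chi> = \<chi>"
      using inj_onD[OF inj Ind_conjf[OF g] rchar_RO[OF rchar_conj[OF chi g]] rchar_RO[OF chi]] .
    then have "conjf g \<chi> a = \<chi> a" by simp
    then show "\<chi> a = \<chi> z" using a z_def by (simp add: conjf_def)
  qed
  from group.sep_real[OF K_group _ _ _ this] a m fin finite_subset subset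
  obtain k where "k \<in> H" "z = k \<otimes> a \<otimes> inv\<^bsub>G\<lparr>carrier := H\<rparr>\<^esub> k \<or>
     z = k \<otimes> inv\<^bsub>G\<lparr>carrier := H\<rparr>\<^esub> a \<otimes> inv\<^bsub>G\<lparr>carrier := H\<rparr>\<^esub> k" by auto
  then show ?thesis using K_inv a unfolding conj_class_def z_def by auto
qed

lemma main2: assumes fin: "finite (carrier G)"
  shows "inj_on (Ind G H) (RO (G\<lparr>carrier := H\<rparr>)) \<longleftrightarrow> (\<forall>n\<in>H. real_conj_class G (carrier G) n = real_conj_class G H n)"
proof
  assume inj: "inj_on (Ind G H) (RO (G\<lparr>carrier := H\<rparr>))"
  show "\<forall>n\<in>H. real_conj_class G (carrier G) n = real_conj_class G H n"
  proof
    fix n assume n: "n \<in> H"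
    show "real_conj_class G (carrier G) n = real_conj_class G H n"
    proof
      show "real_conj_class G H n \<subseteq> real_conj_class G (carrier G) n"
        unfolding real_conj_class_def conj_class_def using subset by blast
      show "real_conj_class G (carrier G) n \<subseteq> real_conj_class G H n"
      proof
        fix z assume "z \<in> real_conj_class G (carrier G) n"
        then obtain g where g: "g \<in> carrier G" and z: "z = g \<otimes> n \<otimes> inv g \<or> z = g \<otimes> inv n \<otimes> inv g"
          unfolding real_conj_class_def conj_class_def by blast
        have ni: "inv n \<in> H" using n by (rule m_inv_closed)
        have "inv (inv n) = n" using n by simp
        then show "z \<in> real_conj_class G H n"
          using z real_helper[OF fin inj n g] real_helper[OF fin inj ni g]
          unfolding real_conj_class_def by auto
      qed
    qed
  qed
next
  assume cl: "\<forall>n\<in>H. real_conj_class G (carrier G) n = real_conj_class G H n"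
  show "inj_on (Ind G H) (RO (G\<lparr>carrier := H\<rparr>))"
  proof (rule inj_from_scale[OF fin], intro subsetI CollectI conjI ballI)
    fix f assume f: "f \<in> RO (G\<lparr>carrier := H\<rparr>)"
    show "\<forall>x. x \<notin> H \<longrightarrow> f x = 0" using RO_props(1)[OF fin f] .
    fix y x assume y: "y \<in> H" and x: "x \<in> carrier G"
    have "x \<otimes> y \<otimes> inv x \<in> real_conj_class G (carrier G) y"
      using x unfolding real_conj_class_def conj_class_def by blast
    then have "x \<otimes> y \<otimes> inv x \<in> real_conj_class G H y" using cl y by simp
    then obtain k where k: "k \<in> H" "x \<otimes> y \<otimes> inv x = k \<otimes> y \<otimes> inv k \<or> x \<otimes> y \<otimes> inv x = k \<otimes> inv y \<otimes> inv k"
      unfolding real_conj_class_def conj_class_def by blast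
    have yi: "inv y \<in> H" using y by (rule m_inv_closed)
    show "f (x \<otimes> y \<otimes> inv x) = f y"
      using k RO_props(2)[OF fin f] RO_props(3)[OF fin f] y yi by auto
  qed
qed

end

theorem mainTheorem3:
  fixes G :: "('g, 'b) monoid_scheme" and N :: "'g set"
  assumes "group G" and "finite (carrier G)" and "N \<lhd> G"
  shows "(inj_on (Ind G N) (R (G\<lparr>carrier := N\<rparr>))
           \<longleftrightarrow> (\<forall>n\<in>N. conj_class G (carrier G) n = conj_class G N n))
       \<and> (inj_on (Ind G N) (RO (G\<lparr>carrier := N\<rparr>))
           \<longleftrightarrow> (\<forall>n\<in>N. real_conj_class G (carrier G) n = real_conj_class G N n))"
proof -
  interpret normal N G by (rule assms(3))
  show ?thesis using main1[OF assms(2)] main2[OF assms(2)] by blast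
qed

end
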